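(* Consider $v$ CRs whose per-segment sub-Nyquist sample numbers $M_1,\dots,M_v$ are distinct consecutive primes with $M_iM_j>N$ for all $i\ne j$, and suppose the Nyquist spectrum is $s$-sparse (at most $s$ occupied bins, forming the support $\Omega\subseteq\{0,\dots,N-1\}$). Fix a bin $k$ and threshold $\lambda_k>0$, and use the decision rule: declare $\mathcal H_{1,k}$ iff $\widehat{E_s}[k]>\lambda_k$. Assume the following model for the test statistic: under $\mathcal H_{0,k}$ (bin $k$ unoccupied), $\widehat{E_s}[k]\sim\chi^2_{2Jv}\big(\tfrac{2}{N}\sum_{i\in\Upsilon_k}M_i\gamma_i[k]\big)$, and under $\mathcal H_{1,k}$ (bin $k$ occupied), $\widehat{E_s}[k]\sim\chi^2_{2Jv}(\mu)$ for some $\mu\ge \tfrac{2}{N}\sum_{i=1}^{v}M_i\gamma_i[k]$. Then $|\Upsilon_k|\le s$, and for any set $\Upsilon\supseteq \Upsilon_k$ of $s$ CRs, the probability of false alarm $P_{f,k}=\Pr(\widehat{E_s}[k]>\lambda_k\mid\mathcal H_{0,k})$ and probability of detection $P_{d,k}=\Pr(\widehat{E_s}[k]>\lambda_k\mid\mathcal H_{1,k})$ satisfy $$\frac{\Gamma(Jv,\lambda_k/2)}{\Gamma(Jv)}\le P_{f,k}\le Q_{Jv}\Big(\sqrt{\tfrac{2}{N}\textstyle\sum_{i\in\Upsilon}M_i\gamma_i[k]},\sqrt{\lambda_k}\Big),\qquad P_{d,k}\ge Q_{Jv}\Big(\sqrt{\tfrac{2}{N}\textstyle\sum_{i=1}^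{v}M_i\gamma_i[k]},\sqrt{\lambda_k}\Big).$$
   Context: Multi-rate sub-Nyquist spectrum sensing: $v$ CRs observe a signal over time $T$; Nyquist sampling would give $JN$ samples split into $J$ segments of $N$ samples. CR $i$ samples at a sub-Nyquist rate giving $JM_i$ samples, split into $J$ segments of $M_i$ samples; $Y_{i,j}[m]$ ($m=0,\dots,M_i-1$) is the DFT of segment $j$ at CR $i$, $E_{s,i}[m]=\sum_{j=1}^J|Y_{i,j}[m]|^2$, and the fusion-center test statistic is $\widehat{E_s}[k]=\sum_{i=1}^v \frac{N}{M_i}E_{s,i}[k \bmod M_i]$, $k=0,\dots,N-1$. $\gamma_i[k]\ge0$ denotes the SNR at CR $i$ associated with bin $k$ (for an unoccupied bin, the SNR of the occupied component aliased onto it). $\Upsilon_k$ is the set of CRs $i$ for which $k$ is an aliased frequency, i.e. $k\notin\Omega$ and $k\equiv k'\pmod{M_i}$ for some $k'\in\Omega$. $\chi^2_{d}(\mu)$ is the noncentral chi-square distribution with $d$ degrees of freedom and noncentrality parameter $\mu$ ($\chi^2_d(0)$ central). $\Gamma(a)$ is the gamma function, $\Gamma(a,x)$ the upper incomplete gamma function, and $Q_u(a,x)=\frac{1}{a^{u-1}}\int_x^\infty t^u e^{-(a^2+t^2)/2}I_{u-1}(at)\,dt$ the generalized Marcum Q-function, $I_\nu$ the modified Bessel function of the first kind. *)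

theory Defs
  imports "HOL-Probability.Probability" "HOL-Computational_Algebra.Primes"
begin

definition upper_Gamma :: "real \<Rightarrow> real \<Rightarrow> real" where
  "upper_Gamma a x = (LBINT t:{x..}. t powr (a - 1) * exp (- t))"

definition bessel_I :: "nat \<Rightarrow> real \<Rightarrow> real" where
  "bessel_I \<nu> z = (\<Sum>m. (z / 2) ^ (2 * m + \<nu>) / (fact m * Gamma (real m + real \<nu> + 1)))"

text \<open>Generalized Marcum Q-function Q_u(a,x); at a = 0 it takes its limiting
  (continuous-extension) value Gamma(u, x^2/2) / Gamma(u).\<close>
definition marcumQ :: "nat \<Rightarrow> real \<Rightarrow> real \<Rightarrow> real" where
  "marcumQ u a x =
     (if a = 0 then upper_Gamma (real u) (x ^ 2 / 2) / Gamma (real u)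
      else (1 / a ^ (u - 1)) *
        (LBINT t:{x..}. t ^ u * exp (- (a ^ 2 + t ^ 2) / 2) * bessel_I (u - 1) (a * t)))"

definition chi2_pdf :: "nat \<Rightarrow> real \<Rightarrow> real" where
  "chi2_pdf d x =
     (if x > 0 then x powr (real d / 2 - 1) * exp (- x / 2) /
        (2 powr (real d / 2) * Gamma (real d / 2)) else 0)"

definition nc_chi2_pdf :: "nat \<Rightarrow> real \<Rightarrow> real \<Rightarrow> real" where
  "nc_chi2_pdf d \<mu> x =
     (\<Sum>j. exp (- \<mu> / 2) * (\<mu> / 2) ^ j / fact j * chi2_pdf (d + 2 * j) x)"

definition has_nc_chi2_law :: "'a measure \<Rightarrow> ('a \<Rightarrow> real) \<Rightarrow> nat \<Rightarrow> real \<Rightarrow> bool" where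
  "has_nc_chi2_law M X d \<mu> \<longleftrightarrow>
     prob_space M \<and> X \<in> borel_measurable M \<and>
     distr M lborel X = density lborel (\<lambda>x. ennreal (nc_chi2_pdf d \<mu> x))"

text \<open>Upsilon_k: CRs i in 1..v for which bin k is an aliased frequency.\<close>
definition aliased_CRs :: "nat \<Rightarrow> (nat \<Rightarrow> nat) \<Rightarrow> nat set \<Rightarrow> nat \<Rightarrow> nat set" where
  "aliased_CRs v M \<Omega> k =
     {i \<in> {1..v}. k \<notin> \<Omega> \<and> (\<exists>k'\<in>\<Omega>. k mod M i = k' mod M i)}"

end

theory Submission
  imports Defs "HOL-Real_Asymp.Real_Asymp"
begin


definition pc :: "nat \<Rightarrow> real \<Rightarrow> real" where
  "pc n y = exp (- y) * (\<Sum>i<n. y ^ i / fact i)"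

lemma pc_deriv: "((\<lambda>t. pc (Suc k) t) has_real_derivative (- (exp (- t) * t ^ k / fact k))) (at t)"
proof (induction k)
  case 0
  show ?case unfolding pc_def by (auto intro!: derivative_eq_intros)
next
  case (Suc k)
  have e: "(\<lambda>t. pc (Suc (Suc k)) t) = (\<lambda>t. pc (Suc k) t + exp (- t) * t ^ Suc k / fact (Suc k))"
    by (auto simp: pc_def algebra_simps)
  have d: "((\<lambda>t. exp (- t) * t ^ Suc k / fact (Suc k)) has_real_derivative
      (exp (-t) * t ^ k / fact k - exp (- t) * t ^ Suc k / fact (Suc k))) (at t)"
  proof -
    have "((\<lambda>t. exp (- t) * t ^ Suc k / fact (Suc k)) has_real_derivative
      ((- exp (-t)) * t ^ Suc k / fact (Suc k) + exp (-t) * (real (Suc k) * t ^ k) / fact (Suc k))) (at t)"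
      by (auto intro!: derivative_eq_intros simp del: fact_Suc power_Suc of_nat_Suc)
        (simp add: diff_divide_distrib mult_ac)
    moreover have "(- exp (-t)) * t ^ Suc k / fact (Suc k) + exp (-t) * (real (Suc k) * t ^ k) / fact (Suc k)
       = exp (-t) * t ^ k / fact k - exp (- t) * t ^ Suc k / fact (Suc k)"
      by (simp add: fact_Suc divide_simps del: of_nat_Suc)
    ultimately show ?thesis by simp
  qed
  show ?case unfolding e using DERIV_add[OF Suc d] by simp
qed

lemma pc_lim: "((\<lambda>t. pc n t) \<longlongrightarrow> 0) at_top"
proof -
  have h: "\<And>i. ((\<lambda>t::real. t ^ i / exp t / fact i) \<longlongrightarrow> 0) at_top"
    by (rule tendsto_divide_zero[OF tendsto_power_div_exp_0])
  have "((\<lambda>t::real. \<Sum>i<n. (t ^ i / exp t) / fact i) \<longlongrightarrow> 0) at_top"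
    by (rule tendsto_null_sum[OF h])
  moreover have "(\<lambda>t. \<Sum>i<n. (t ^ i / exp t) / fact i) = (\<lambda>t. pc n t)"
    by (auto simp: pc_def sum_distrib_left exp_minus field_simps)
  ultimately show ?thesis by simp
qed

lemma pc_nonneg: "0 \<le> y \<Longrightarrow> 0 \<le> pc n y"
  unfolding pc_def by (intro mult_nonneg_nonneg sum_nonneg) auto

lemma tail_FTC:
  fixes \<phi> \<phi>' :: "real \<Rightarrow> real"
  assumes der: "\<And>t. x \<le> t \<Longrightarrow> (\<phi> has_real_derivative \<phi>' t) (at t)"
    and pos: "\<And>t. x \<le> t \<Longrightarrow> 0 \<le> \<phi>' t" "\<And>t. x \<le> t \<Longrightarrow> 0 \<le> \<phi> t"
    and lim: "filterlim \<phi> at_top at_top"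
    and meas: "(\<lambda>t. exp (- \<phi> t) * \<phi> t ^ k / fact k * \<phi>' t) \<in> borel_measurable borel"
  shows "(\<integral>\<^sup>+t. ennreal (exp (- \<phi> t) * \<phi> t ^ k / fact k * \<phi>' t) * indicator {x..} t \<partial>lborel)
       = ennreal (pc (Suc k) (\<phi> x))"
proof -
  have "(\<integral>\<^sup>+t. ennreal (exp (- \<phi> t) * \<phi> t ^ k / fact k * \<phi>' t) * indicator {x..} t \<partial>lborel)
      = ennreal (0 - (- pc (Suc k) (\<phi> x)))"
  proof (rule nn_integral_FTC_atLeast[OF meas])
    fix t assume t: "x \<le> t"
    show "((\<lambda>t. - pc (Suc k) (\<phi> t)) has_real_derivative exp (- \<phi> t) * \<phi> t ^ k / fact k * \<phi>' t) (at t)"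
      using DERIV_chain2[OF pc_deriv der[OF t], of k] DERIV_minus by fastforce
    show "0 \<le> exp (- \<phi> t) * \<phi> t ^ k / fact k * \<phi>' t" using pos[OF t] by simp
  next
    show "((\<lambda>t. - pc (Suc k) (\<phi> t)) \<longlongrightarrow> 0) at_top"
      using tendsto_minus[OF filterlim_compose[OF pc_lim lim]] by simp
  qed
  then show ?thesis by simp
qed


lemma upper_Gamma_pc:
  assumes y: "y > 0"
  shows "upper_Gamma (real (Suc k)) y / Gamma (real (Suc k)) = pc (Suc k) y"
proof -
  have m: "(\<lambda>t::real. exp (- t) * t ^ k / fact k * 1) \<in> borel_measurable borel" by measurable
  have ftc: "(\<integral>\<^sup>+t. ennreal (exp (- t) * t ^ k / fact k * 1) * indicator {y..} t \<partial>lborel)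
       = ennreal (pc (Suc k) y)"
    using tail_FTC[of y "\<lambda>t. t" "\<lambda>_. 1" k, OF _ _ _ filterlim_ident m] y
    by (auto intro!: derivative_eq_intros)
  have "upper_Gamma (real (Suc k)) y
      = enn2real (\<integral>\<^sup>+t. ennreal (indicator {y..} t *\<^sub>R (t powr (real (Suc k) - 1) * exp (- t))) \<partial>lborel)"
    unfolding upper_Gamma_def set_lebesgue_integral_def
    by (rule integral_eq_nn_integral) (auto simp: indicator_def)
  also have "(\<integral>\<^sup>+t. ennreal (indicator {y..} t *\<^sub>R (t powr (real (Suc k) - 1) * exp (- t))) \<partial>lborel)
      = (\<integral>\<^sup>+t. ennreal (fact k) * (ennreal (exp (- t) * t ^ k / fact k * 1) * indicator {y..} t) \<partial>lborel)"
  proof (rule nn_integral_cong)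
    fix t :: real
    show "ennreal (indicator {y..} t *\<^sub>R (t powr (real (Suc k) - 1) * exp (- t))) =
         ennreal (fact k) * (ennreal (exp (- t) * t ^ k / fact k * 1) * indicator {y..} t)"
    proof (cases "y \<le> t")
      case True
      then have "t > 0" using y by simp
      then show ?thesis using True
        by (simp add: powr_realpow ennreal_mult'[symmetric] indicator_def)
    qed (simp add: indicator_def)
  qed
  also have "\<dots> = ennreal (fact k) * ennreal (pc (Suc k) y)"
    by (subst nn_integral_cmult) (use m ftc in auto)
  finally have "upper_Gamma (real (Suc k)) y = fact k * pc (Suc k) y"
    using pc_nonneg[of y "Suc k"] y by (simp add: ennreal_mult'[symmetric])
  then show ?thesis
    using Gamma_fact[of k, where 'a=real] by simp
qed


lemma chi2_pdf_eq:
  assumes "x > 0"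
  shows "chi2_pdf (2 * Suc k) x = exp (- (x / 2)) * (x / 2) ^ k / fact k * (1 / 2)"
proof -
  have a: "real (2 * Suc k) / 2 - 1 = real k" by (simp add: add_divide_distrib)
  have b: "real (2 * Suc k) / 2 = real (Suc k)" by simp
  have g: "Gamma (real (Suc k)) = fact k" using Gamma_fact[of k, where 'a=real] by simp
  have c: "(2::real) powr real (Suc k) = 2 ^ Suc k" by (rule powr_realpow) simp
  show ?thesis using assms unfolding chi2_pdf_def unfolding a unfolding b g c
    by (simp add: powr_realpow power_divide field_simps del: of_nat_Suc)
qed

lemma chi2_tail:
  assumes lam: "lam > 0"
  shows "(\<integral>\<^sup>+x. ennreal (chi2_pdf (2 * Suc k) x) * indicator {lam<..} x \<partial>lborel)
      = ennreal (pc (Suc k) (lam / 2))"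
proof -
  have m: "(\<lambda>t::real. exp (- (t/2)) * (t/2) ^ k / fact k * (1/2)) \<in> borel_measurable borel" by measurable
  have lim: "filterlim (\<lambda>t::real. t / 2) at_top at_top" by real_asymp
  have ftc: "(\<integral>\<^sup>+t. ennreal (exp (- (t/2)) * (t/2) ^ k / fact k * (1/2)) * indicator {lam..} t \<partial>lborel)
       = ennreal (pc (Suc k) (lam/2))"
  proof -
    have d: "\<And>t. ((\<lambda>t. t/2) has_real_derivative 1/2) (at t)"
      by (intro derivative_eq_intros) auto
    show ?thesis using tail_FTC[of lam "\<lambda>t. t/2" "\<lambda>_. 1/2" k, OF d _ _ lim m] lam by simp
  qed
  have "(\<integral>\<^sup>+x. ennreal (chi2_pdf (2 * Suc k) x) * indicator {lam<..} x \<partial>lborel)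
      = (\<integral>\<^sup>+t. ennreal (exp (- (t/2)) * (t/2) ^ k / fact k * (1/2)) * indicator {lam..} t \<partial>lborel)"
  proof (rule nn_integral_cong_AE)
    show "AE x in lborel. ennreal (chi2_pdf (2 * Suc k) x) * indicator {lam<..} x =
        ennreal (exp (- (x / 2)) * (x / 2) ^ k / fact k * (1 / 2)) * indicator {lam..} x"
      using AE_lborel_singleton[of lam]
    proof eventually_elim
      case (elim x)
      then show ?case using lam chi2_pdf_eq[of x k]
        by (cases "lam < x") (auto simp: indicator_def)
    qed
  qed
  then show ?thesis using ftc by simp
qed


lemma chi2_pdf_nonneg: "0 \<le> chi2_pdf (2 * Suc k) x"
proof (cases "x > 0")
  case True then show ?thesis by (subst chi2_pdf_eq[OF True]) simp
next
  case False then show ?thesis unfolding chi2_pdf_def by simp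
qed

definition ncw :: "real \<Rightarrow> nat \<Rightarrow> real" where
  "ncw \<mu> j = exp (- \<mu> / 2) * (\<mu> / 2) ^ j / fact j"

lemma ncw_nonneg: "0 \<le> \<mu> \<Longrightarrow> 0 \<le> ncw \<mu> j"
  by (simp add: ncw_def)

lemma ncw_summable: "summable (ncw \<mu>)"
proof -
  have "summable (\<lambda>j. exp (- \<mu> / 2) * (inverse (fact j) * (\<mu>/2) ^ j))"
    by (intro summable_mult summable_exp)
  then show ?thesis unfolding ncw_def by (simp add: field_simps)
qed

lemma nc_term_eq: "2 * Suc u' + 2 * j = 2 * Suc (u' + j)" by simp

lemma nc_summable:
  assumes mu: "0 \<le> \<mu>"
  shows "summable (\<lambda>j. ncw \<mu> j * chi2_pdf (2 * Suc u' + 2 * j) x)"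
proof (cases "x > 0")
  case False
  then show ?thesis by (simp add: chi2_pdf_def)
next
  case True
  let ?A = "exp (- (x / 2)) * (x / 2) ^ u'"
  have s: "summable (\<lambda>j. ?A * (inverse (fact j) * (\<mu> * x / 4) ^ j))"
    by (intro summable_mult summable_exp)
  show ?thesis
  proof (rule summable_comparison_test'[OF s])
    fix j :: nat
    have four: "(2::real) ^ j * 2 ^ j = 4 ^ j" by (simp add: power_mult_distrib[symmetric])
    have e: "ncw \<mu> j * chi2_pdf (2 * Suc u' + 2 * j) x =
      (exp (- \<mu> / 2) * (1/2) / fact (u' + j)) * (?A * (inverse (fact j) * (\<mu> * x / 4) ^ j))"
      unfolding nc_term_eq chi2_pdf_eq[OF True] ncw_def
      by (simp add: power_add power_mult_distrib field_simps four)
    have b: "exp (- \<mu> / 2) * (1/2) / fact (u' + j) \<le> 1"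
    proof -
      have e1: "exp (- (\<mu> / 2)) \<le> 1" using mu by simp
      have f1: "(1::real) \<le> fact (j + u')" by simp
      show ?thesis using e1 f1 by (simp add: field_simps; linarith)
    qed
    have nn: "0 \<le> ?A * (inverse (fact j) * (\<mu> * x / 4) ^ j)" using True mu by simp
    have nn2: "0 \<le> exp (- \<mu> / 2) * (1/2) / fact (u' + j)" by simp
    show "norm (ncw \<mu> j * chi2_pdf (2 * Suc u' + 2 * j) x) \<le> ?A * (inverse (fact j) * (\<mu> * x / 4) ^ j)"
    proof -
      have ab: "\<bar>(x/2)^u'\<bar> = (x/2)^u'" "\<bar>(\<mu>*x/4)^j\<bar> = (\<mu>*x/4)^j" using True mu by simp_all
      show ?thesis
      unfolding e using mult_right_mono[OF b nn] nn nn2 by (simp add: abs_mult ab)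
    qed
  qed
qed


lemma pc_le1:
  assumes y: "0 \<le> y" shows "pc n y \<le> 1"
proof -
  have s: "(\<lambda>i. y ^ i / fact i) sums exp y" using exp_converges[of y] by (simp add: divide_inverse_commute)
  have "(\<Sum>i<n. y ^ i / fact i) \<le> exp y"
    using sum_le_suminf[OF sums_summable[OF s], of "{..<n}"] sums_unique[OF s] y by simp
  then have "exp (- y) * (\<Sum>i<n. y ^ i / fact i) \<le> exp (- y) * exp y" by simp
  then show ?thesis unfolding pc_def by (simp add: exp_minus field_simps)
qed

definition Tsum :: "nat \<Rightarrow> real \<Rightarrow> real \<Rightarrow> real" where
  "Tsum u y \<mu> = (\<Sum>j. ncw \<mu> j * pc (u + j) y)"

lemma Tsum_summable:
  assumes "0 \<le> \<mu>" "0 \<le> y"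
  shows "summable (\<lambda>j. ncw \<mu> j * pc (u + j) y)"
proof (rule summable_comparison_test'[OF ncw_summable])
  fix j
  show "norm (ncw \<mu> j * pc (u + j) y) \<le> ncw \<mu> j"
    using pc_le1[of y "u+j"] pc_nonneg[of y "u+j"] ncw_nonneg[of \<mu> j] assms
    by (simp add: abs_mult mult_left_le)
qed

lemma chi2_meas: "chi2_pdf d \<in> borel_measurable borel"
  unfolding chi2_pdf_def by measurable

lemma prob_tail:
  assumes law: "has_nc_chi2_law P X (2 * Suc u') \<mu>" and mu: "0 \<le> \<mu>" and lam: "0 < lam"
  shows "measure P {\<omega> \<in> space P. X \<omega> > lam} = Tsum (Suc u') (lam/2) \<mu>"
proof -
  let ?t = "\<lambda>j x. ncw \<mu> j * chi2_pdf (2 * Suc u' + 2 * j) x"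
  have Xm: "X \<in> borel_measurable P" and D: "distr P lborel X = density lborel (\<lambda>x. ennreal (nc_chi2_pdf (2 * Suc u') \<mu> x))"
    using law unfolding has_nc_chi2_law_def by auto
  have tn: "0 \<le> ?t j x" for j x
    using ncw_nonneg[OF mu] chi2_pdf_nonneg[of "u'+j" x] by (simp add: nc_term_eq)
  have fe: "ennreal (nc_chi2_pdf (2 * Suc u') \<mu> x) = (\<Sum>j. ennreal (?t j x))" for x
    unfolding nc_chi2_pdf_def ncw_def[symmetric]
    by (rule suminf_ennreal2[symmetric]) (use tn nc_summable[OF mu] in auto)
  have tm: "\<And>j. (\<lambda>x. ennreal (?t j x)) \<in> borel_measurable borel"
    using chi2_meas by measurable
  have fm: "(\<lambda>x. ennreal (nc_chi2_pdf (2 * Suc u') \<mu> x)) \<in> borel_measurable borel"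
    unfolding fe using tm by measurable
  have set: "{\<omega> \<in> space P. X \<omega> > lam} = X -` {lam<..} \<inter> space P" by auto
  have "measure P {\<omega> \<in> space P. X \<omega> > lam} = measure (distr P lborel X) {lam<..}"
    unfolding set by (rule measure_distr[symmetric]) (use Xm in auto)
  also have "\<dots> = enn2real (\<integral>\<^sup>+x. ennreal (nc_chi2_pdf (2 * Suc u') \<mu> x) * indicator {lam<..} x \<partial>lborel)"
    unfolding D measure_def by (subst emeasure_density) (use fm in auto)
  also have "(\<integral>\<^sup>+x. ennreal (nc_chi2_pdf (2 * Suc u') \<mu> x) * indicator {lam<..} x \<partial>lborel)
      = (\<integral>\<^sup>+x. (\<Sum>j. ennreal (?t j x) * indicator {lam<..} x) \<partial>lborel)"
    unfolding fe by simp
  also have "\<dots> = (\<Sum>j. \<integral>\<^sup>+x. ennreal (?t j x) * indicator {lam<..} x \<partial>lborel)"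
    by (rule nn_integral_suminf) (use tm in measurable)
  also have "\<dots> = (\<Sum>j. ennreal (ncw \<mu> j * pc (Suc u' + j) (lam/2)))"
  proof (rule suminf_cong)
    fix j
    have "(\<integral>\<^sup>+x. ennreal (?t j x) * indicator {lam<..} x \<partial>lborel)
        = (\<integral>\<^sup>+x. ennreal (ncw \<mu> j) * (ennreal (chi2_pdf (2 * Suc (u' + j)) x) * indicator {lam<..} x) \<partial>lborel)"
      unfolding nc_term_eq
      by (intro nn_integral_cong, subst ennreal_mult[OF ncw_nonneg[OF mu] chi2_pdf_nonneg]) (rule mult.assoc)
    also have "\<dots> = ennreal (ncw \<mu> j) * (\<integral>\<^sup>+x. ennreal (chi2_pdf (2 * Suc (u' + j)) x) * indicator {lam<..} x \<partial>lborel)"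
      by (rule nn_integral_cmult) (use chi2_meas in measurable)
    also have "\<dots> = ennreal (ncw \<mu> j) * ennreal (pc (Suc (u' + j)) (lam/2))"
      by (simp only: chi2_tail[OF lam])
    also have "\<dots> = ennreal (ncw \<mu> j * pc (Suc u' + j) (lam/2))"
      using ennreal_mult[OF ncw_nonneg[OF mu] pc_nonneg[of "lam/2" "Suc (u'+j)"]] lam by simp
    finally show "(\<integral>\<^sup>+x. ennreal (?t j x) * indicator {lam<..} x \<partial>lborel) = ennreal (ncw \<mu> j * pc (Suc u' + j) (lam/2))" .
  qed
  also have "\<dots> = ennreal (Tsum (Suc u') (lam/2) \<mu>)"
    unfolding Tsum_def
  proof (rule suminf_ennreal2)
    show "0 \<le> ncw \<mu> j * pc (Suc u' + j) (lam / 2)" for j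
      using ncw_nonneg[OF mu, of j] pc_nonneg[of "lam/2" "Suc u' + j"] lam by simp
    show "summable (\<lambda>j. ncw \<mu> j * pc (Suc u' + j) (lam / 2))"
      using Tsum_summable[OF mu, of "lam/2" "Suc u'"] lam by simp
  qed
  finally have *: "measure P {\<omega> \<in> space P. X \<omega> > lam} = enn2real (ennreal (Tsum (Suc u') (lam/2) \<mu>))" .
  have Tn: "0 \<le> Tsum (Suc u') (lam/2) \<mu>"
    unfolding Tsum_def
  proof (rule suminf_nonneg)
    show "0 \<le> ncw \<mu> j * pc (Suc u' + j) (lam / 2)" for j
      using ncw_nonneg[OF mu, of j] pc_nonneg[of "lam/2" "Suc u' + j"] lam by simp
    show "summable (\<lambda>j. ncw \<mu> j * pc (Suc u' + j) (lam / 2))"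
      using Tsum_summable[OF mu, of "lam/2" "Suc u'"] lam by simp
  qed
  show ?thesis using * Tn by simp
qed




lemma Tsum_zero: "Tsum u y 0 = pc u y"
proof -
  have "(\<lambda>j. ncw 0 j * pc (u + j) y) = (\<lambda>j. if j = 0 then pc (u + j) y else 0)"
    by (auto simp: ncw_def)
  then show ?thesis unfolding Tsum_def using sums_unique[OF sums_single[of 0 "\<lambda>j. pc (u + j) y"]] by simp
qed

lemma pc_Suc: "pc (Suc n) y - pc n y = exp (- y) * y ^ n / fact n"
  unfolding pc_def by (simp add: algebra_simps)

lemma Tsum_mono:
  assumes y: "0 \<le> y" and m: "0 \<le> \<mu>" "\<mu> \<le> \<mu>'"
  shows "Tsum u y \<mu> \<le> Tsum u y \<mu>'"
proof -
  define C where "C j = pc (u + j) y" for j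
  define c where "c j = C j / fact j" for j
  define H where "H m = (\<Sum>j. c j * m ^ j)" for m :: real
  define G where "G m = exp (- m) * H m" for m
  have C01: "0 \<le> C j" "C j \<le> 1" for j unfolding C_def using pc_nonneg pc_le1 y by auto
  have Cmono: "C j \<le> C (Suc j)" for j
  proof -
    have "0 \<le> exp (- y) * y ^ (u + j) / fact (u + j)" using y by simp
    then show ?thesis using pc_Suc[of "u + j" y] unfolding C_def by simp
  qed
  have sumc: "summable (\<lambda>j. c j * z ^ j)" for z :: real
  proof (rule summable_comparison_test'[OF summable_exp[of "\<bar>z\<bar>"]])
    fix j
    show "norm (c j * z ^ j) \<le> inverse (fact j) * \<bar>z\<bar> ^ j"
    proof -
      have "norm (c j * z ^ j) = C j * (inverse (fact j) * \<bar>z\<bar> ^ j)"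
        using C01[of j] by (simp add: c_def abs_mult power_abs divide_inverse)
      then show ?thesis using mult_left_le_one_le[of "inverse (fact j) * \<bar>z\<bar> ^ j" "C j"] C01[of j] by simp
    qed
  qed
  have sumd: "summable (\<lambda>j. diffs c j * z ^ j)" for z :: real
  proof (rule summable_comparison_test'[OF summable_exp[of "\<bar>z\<bar>"]])
    fix j
    have "diffs c j = C (Suc j) / fact j" by (simp add: diffs_def c_def field_simps del: of_nat_Suc)
    show "norm (diffs c j * z ^ j) \<le> inverse (fact j) * \<bar>z\<bar> ^ j"
    proof -
      have "norm (diffs c j * z ^ j) = C (Suc j) * (inverse (fact j) * \<bar>z\<bar> ^ j)"
        using C01[of "Suc j"] \<open>diffs c j = C (Suc j) / fact j\<close> by (simp add: abs_mult power_abs divide_inverse)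
      then show ?thesis using mult_left_le_one_le[of "inverse (fact j) * \<bar>z\<bar> ^ j" "C (Suc j)"] C01[of "Suc j"] by simp
    qed
  qed
  have Teq: "Tsum u y \<nu> = G (\<nu> / 2)" for \<nu>
  proof -
    have "(\<lambda>j. ncw \<nu> j * pc (u + j) y) = (\<lambda>j. exp (- (\<nu>/2)) * (c j * (\<nu>/2) ^ j))"
      by (auto simp: ncw_def c_def C_def)
    then show ?thesis unfolding Tsum_def G_def H_def using suminf_mult[OF sumc] by simp
  qed
  have dG: "(G has_real_derivative exp (- m) * (\<Sum>j. (C (Suc j) - C j) / fact j * m ^ j)) (at m)" for m
  proof -
    have dH: "(H has_real_derivative (\<Sum>j. diffs c j * m ^ j)) (at m)"
      unfolding H_def by (rule termdiffs_strong'[of "\<bar>m\<bar> + 1"]) (use sumc in auto)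
    have "(G has_real_derivative (- exp (- m) * H m + exp (- m) * (\<Sum>j. diffs c j * m ^ j))) (at m)"
      unfolding G_def[abs_def] by (auto intro!: derivative_eq_intros dH)
    moreover have "(\<Sum>j. diffs c j * m ^ j) - H m = (\<Sum>j. (C (Suc j) - C j) / fact j * m ^ j)"
    proof -
      have "(\<Sum>j. diffs c j * m ^ j) - H m = (\<Sum>j. diffs c j * m ^ j - c j * m ^ j)"
        unfolding H_def using suminf_diff[OF sumd sumc] by simp
      also have "\<dots> = (\<Sum>j. (C (Suc j) - C j) / fact j * m ^ j)"
        by (rule suminf_cong) (simp add: diffs_def c_def field_simps del: of_nat_Suc)
      finally show ?thesis .
    qed
    ultimately show ?thesis by (simp add: algebra_simps)
  qed
  have "G (\<mu>/2) \<le> G (\<mu>'/2)"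
  proof (rule DERIV_nonneg_imp_nondecreasing[of "\<mu>/2" "\<mu>'/2" G])
    show "\<mu>/2 \<le> \<mu>'/2" using m by simp
    fix x assume x: "\<mu>/2 \<le> x" "x \<le> \<mu>'/2"
    have "0 \<le> (\<Sum>j. (C (Suc j) - C j) / fact j * x ^ j)"
    proof (rule suminf_nonneg)
      show "summable (\<lambda>j. (C (Suc j) - C j) / fact j * x ^ j)"
      proof -
        have "(\<lambda>j. (C (Suc j) - C j) / fact j * x ^ j) = (\<lambda>j. diffs c j * x ^ j - c j * x ^ j)"
          by (rule ext) (simp add: diffs_def c_def field_simps del: of_nat_Suc)
        then show ?thesis using summable_diff[OF sumd sumc] by simp
      qed
      show "0 \<le> (C (Suc j) - C j) / fact j * x ^ j" for j
        using Cmono[of j] x m by simp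
    qed
    then show "\<exists>d. (G has_real_derivative d) (at x) \<and> 0 \<le> d"
      using dG[of x] by auto
  qed
  then show ?thesis unfolding Teq .
qed




lemma Gamma_mu: "Gamma (real m + real u' + 1) = (fact (m + u') :: real)"
  using Gamma_fact[of "m+u'", where 'a=real] by (simp add: add_ac)

lemma bessel_summable:
  "summable (\<lambda>m. (z / 2) ^ (2 * m + u') / (fact m * Gamma (real m + real u' + 1)))"
proof (rule summable_comparison_test'[OF summable_mult[OF summable_exp[of "\<bar>z/2\<bar>^2"]]])
  fix m
  define w where "w = \<bar>z/2\<bar>"
  have w0: "0 \<le> w" unfolding w_def by simp
  have "norm ((z / 2) ^ (2 * m + u') / (fact m * Gamma (real m + real u' + 1)))
      = w ^ (2 * m + u') / (fact m * fact (m + u'))"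
    unfolding Gamma_mu w_def real_norm_def abs_divide power_abs by simp
  also have "w ^ (2 * m + u') = w ^ u' * (w ^ 2) ^ m"
    by (simp add: power_add power_mult[symmetric] mult.commute)
  also have "w ^ u' * (w ^ 2) ^ m / (fact m * fact (m + u')) = w ^ u' * (inverse (fact m) * (w^2) ^ m) / fact (m + u')"
    by (simp add: divide_inverse)
  also have "\<dots> \<le> w ^ u' * (inverse (fact m) * (w^2) ^ m) / 1"
    by (rule divide_left_mono) (use w0 in simp_all)
  finally show "norm ((z / 2) ^ (2 * m + u') / (fact m * Gamma (real m + real u' + 1)))
      \<le> \<bar>z/2\<bar> ^ u' * (inverse (fact m) * (\<bar>z/2\<bar>^2) ^ m)" unfolding w_def by simp
qed

lemma bessel_meas: "bessel_I u' \<in> borel_measurable borel"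
proof (rule borel_measurable_LIMSEQ_real)
  fix z :: real
  show "(\<lambda>n. \<Sum>m<n. (z / 2) ^ (2 * m + u') / (fact m * Gamma (real m + real u' + 1))) \<longlonglongrightarrow> bessel_I u' z"
    unfolding bessel_I_def by (rule summable_LIMSEQ[OF bessel_summable])
next
  fix n
  show "(\<lambda>z. \<Sum>m<n. (z / 2) ^ (2 * m + u') / (fact m * Gamma (real m + real u' + 1))) \<in> borel_measurable borel"
    by measurable
qed




lemma alg:
  fixes a t :: real
  shows "t ^ Suc u' * exp (- (a^2 + t^2) / 2) * ((a * t / 2) ^ (2 * m + u') / (fact m * fact (m + u')))
    = (a ^ u' * (exp (- (a^2) / 2) * (a^2 / 2) ^ m / fact m)) * (exp (- (t^2/2)) * (t^2/2) ^ (m + u') / fact (m + u') * t)"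
proof -
  have e: "exp (- (a^2 + t^2) / 2) = exp (- (a^2) / 2) * exp (- (t^2/2))"
    by (simp add: exp_add[symmetric] add_divide_distrib)
  have q: "(2::real)^(m*2) = 2^m*2^m" by (metis power_mult power2_eq_square)
  have p1: "(a * t / 2) ^ (2 * m + u') = a ^ u' * (a^2)^m * (t^2)^m * t ^ u' / (2^m * 2 ^ (m + u'))"
    by (simp add: power_mult_distrib power_divide power_add power_mult[symmetric] mult_ac q)
  have p2: "(t^2/2) ^ (m + u') = (t^2)^m * (t^2)^u' / 2 ^ (m + u')"
    by (simp add: power_divide power_add)
  have p3: "(a^2/2)^m = (a^2)^m / 2^m" by (simp add: power_divide)
  have p4: "t ^ Suc u' * t ^ u' = (t^2)^u' * t"
    by (simp add: power_mult[symmetric] mult_2 power_add)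
  have p5: "t ^ u' * t ^ u' = (t^2)^u'" by (metis power2_eq_square power_mult_distrib)
  show ?thesis unfolding e p1 p2 p3
    using p4 by (simp add: field_simps p5)
qed

lemma bessel_nonneg: "0 \<le> z \<Longrightarrow> 0 \<le> bessel_I u' z"
  unfolding bessel_I_def by (rule suminf_nonneg[OF bessel_summable]) simp

lemma marcum_pos:
  assumes a: "a > 0" and x: "x > 0"
  shows "marcumQ (Suc u') a x = Tsum (Suc u') (x^2/2) (a^2)"
proof -
  define f where "f (t::real) = t ^ Suc u' * exp (- (a ^ 2 + t ^ 2) / 2) * bessel_I u' (a * t)" for t
  define g where "g m (t::real) = exp (- (t^2/2)) * (t^2/2) ^ (m + u') / fact (m + u') * t" for m t
  define K where "K m = a ^ u' * (exp (- (a^2) / 2) * (a^2 / 2) ^ m / fact m)" for m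
  have K0: "0 \<le> K m" for m unfolding K_def using a by simp
  have g0: "t \<ge> 0 \<Longrightarrow> 0 \<le> g m t" for m t unfolding g_def by simp
  have gm: "g m \<in> borel_measurable borel" for m unfolding g_def by measurable
  have fm: "f \<in> borel_measurable borel" unfolding f_def using bessel_meas by measurable
  have ser: "(\<lambda>m. K m * g m t) sums f t" for t
  proof -
    have "(\<lambda>m. (t ^ Suc u' * exp (- (a ^ 2 + t ^ 2) / 2)) *
        ((a * t / 2) ^ (2 * m + u') / (fact m * Gamma (real m + real u' + 1)))) sums f t"
      unfolding f_def bessel_I_def by (rule sums_mult[OF summable_sums[OF bessel_summable]])
    moreover have "(t ^ Suc u' * exp (- (a ^ 2 + t ^ 2) / 2)) *
        ((a * t / 2) ^ (2 * m + u') / (fact m * Gamma (real m + real u' + 1))) = K m * g m t" for m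
      unfolding Gamma_mu K_def g_def using alg[of t u' a m] by (simp add: mult.assoc)
    ultimately show ?thesis by simp
  qed
  have "(LBINT t:{x..}. f t) = enn2real (\<integral>\<^sup>+t. ennreal (indicator {x..} t *\<^sub>R f t) \<partial>lborel)"
    unfolding set_lebesgue_integral_def
  proof (rule integral_eq_nn_integral)
    show "(\<lambda>t. indicat_real {x..} t *\<^sub>R f t) \<in> borel_measurable lborel" using fm by measurable
    show "AE t in lborel. 0 \<le> indicat_real {x..} t *\<^sub>R f t"
    proof (rule AE_I2)
      fix t show "0 \<le> indicat_real {x..} t *\<^sub>R f t"
        using x a bessel_nonneg[of "a * t" u'] by (auto simp: indicator_def f_def)
    qed
  qed
  also have "(\<integral>\<^sup>+t. ennreal (indicator {x..} t *\<^sub>R f t) \<partial>lborel)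
      = (\<integral>\<^sup>+t. (\<Sum>m. ennreal (K m) * (ennreal (g m t) * indicator {x..} t)) \<partial>lborel)"
  proof (rule nn_integral_cong)
    fix t :: real
    show "ennreal (indicator {x..} t *\<^sub>R f t) = (\<Sum>m. ennreal (K m) * (ennreal (g m t) * indicator {x..} t))"
    proof (cases "x \<le> t")
      case True
      then have t0: "0 \<le> t" using x by simp
      have sm: "summable (\<lambda>m. K m * g m t)" by (rule sums_summable[OF ser])
      have ft: "f t = (\<Sum>m. K m * g m t)" by (rule sums_unique[OF ser])
      have nn: "0 \<le> K m * g m t" for m using K0[of m] g0[OF t0, of m] by (rule mult_nonneg_nonneg)
      have "ennreal (f t) = (\<Sum>m. ennreal (K m * g m t))"
        unfolding ft by (rule suminf_ennreal2[symmetric, OF nn sm])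
      also have "\<dots> = (\<Sum>m. ennreal (K m) * (ennreal (g m t) * indicator {x..} t))"
      proof (rule suminf_cong)
        fix m
        show "ennreal (K m * g m t) = ennreal (K m) * (ennreal (g m t) * indicator {x..} t)"
          using True ennreal_mult[OF K0[of m] g0[OF t0, of m]] by (simp add: indicator_def)
      qed
      finally show ?thesis using True by (simp add: indicator_def)
    qed simp
  qed
  also have "\<dots> = (\<Sum>m. \<integral>\<^sup>+t. ennreal (K m) * (ennreal (g m t) * indicator {x..} t) \<partial>lborel)"
    by (rule nn_integral_suminf) (use gm in measurable)
  also have "\<dots> = (\<Sum>m. ennreal (K m * pc (Suc (m + u')) (x^2/2)))"
  proof (rule suminf_cong)
    fix m
    have lim: "filterlim (\<lambda>t::real. t^2/2) at_top at_top" by real_asymp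
    have d: "\<And>t. ((\<lambda>t::real. t^2/2) has_real_derivative t) (at t)"
      by (auto intro!: derivative_eq_intros)
    have "(\<integral>\<^sup>+t. ennreal (g m t) * indicator {x..} t \<partial>lborel) = ennreal (pc (Suc (m + u')) (x^2/2))"
      unfolding g_def using tail_FTC[of x "\<lambda>t. t^2/2" "\<lambda>t. t" "m + u'", OF d _ _ lim] gm[of m] x
      unfolding g_def by simp
    then show "(\<integral>\<^sup>+t. ennreal (K m) * (ennreal (g m t) * indicator {x..} t) \<partial>lborel)
        = ennreal (K m * pc (Suc (m + u')) (x^2/2))"
      using K0[of m] pc_nonneg[of "x^2/2" "Suc (m + u')"]
      by (subst nn_integral_cmult) (use gm in \<open>auto simp: ennreal_mult\<close>)
  qed
  also have "\<dots> = ennreal (a ^ u' * Tsum (Suc u') (x^2/2) (a^2))"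
  proof -
    have s: "summable (\<lambda>j. ncw (a^2) j * pc (Suc u' + j) (x^2/2))"
      by (rule Tsum_summable) simp_all
    have eq: "(\<lambda>m. K m * pc (Suc (m + u')) (x^2/2)) = (\<lambda>m. a ^ u' * (ncw (a^2) m * pc (Suc u' + m) (x^2/2)))"
      by (rule ext) (simp add: K_def ncw_def add.commute[of u'] mult.assoc)
    have "(\<Sum>m. ennreal (K m * pc (Suc (m + u')) (x^2/2))) = ennreal (\<Sum>m. K m * pc (Suc (m + u')) (x^2/2))"
      by (rule suminf_ennreal2) (use K0 pc_nonneg s in \<open>auto simp: eq intro!: summable_mult\<close>)
    also have "(\<Sum>m. K m * pc (Suc (m + u')) (x^2/2)) = a ^ u' * Tsum (Suc u') (x^2/2) (a^2)"
      unfolding eq Tsum_def by (rule suminf_mult[OF s])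
    finally show ?thesis .
  qed
  finally have I: "(LBINT t:{x..}. f t) = a ^ u' * Tsum (Suc u') (x^2/2) (a^2)"
  proof -
    assume "(LBINT t:{x..}. f t) = enn2real (ennreal (a ^ u' * Tsum (Suc u') (x^2/2) (a^2)))"
    moreover have "0 \<le> Tsum (Suc u') (x^2/2) (a^2)"
      unfolding Tsum_def
      by (rule suminf_nonneg[OF Tsum_summable]) (auto intro!: mult_nonneg_nonneg ncw_nonneg pc_nonneg)
    ultimately show ?thesis using a by simp
  qed
  show ?thesis
    unfolding marcumQ_def using a I by (simp add: f_def)
qed




lemma card_aliased:
  fixes v N s k :: nat and M :: "nat \<Rightarrow> nat" and \<Omega> :: "nat set"
  assumes primes: "\<forall>i\<in>{1..v}. prime (M i)"
    and distinct: "inj_on M {1..v}"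
    and prod_gt: "\<forall>i\<in>{1..v}. \<forall>j\<in>{1..v}. i \<noteq> j \<longrightarrow> M i * M j > N"
    and support: "\<Omega> \<subseteq> {..<N}" and sparse: "card \<Omega> \<le> s"
    and bin: "k < N"
  shows "card (aliased_CRs v M \<Omega> k) \<le> s"
proof -
  let ?A = "aliased_CRs v M \<Omega> k"
  define h where "h i = (SOME k'. k' \<in> \<Omega> \<and> k mod M i = k' mod M i)" for i
  have hA: "h i \<in> \<Omega> \<and> k mod M i = h i mod M i" if "i \<in> ?A" for i
  proof -
    from that have "\<exists>k'. k' \<in> \<Omega> \<and> k mod M i = k' mod M i" unfolding aliased_CRs_def by auto
    then show ?thesis unfolding h_def by (rule someI_ex)
  qed
  have kA: "k \<notin> \<Omega>" "i \<in> {1..v}" if "i \<in> ?A" for i using that unfolding aliased_CRs_def by auto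
  have inj: "inj_on h ?A"
  proof (rule inj_onI)
    fix i j assume i: "i \<in> ?A" and j: "j \<in> ?A" and hij: "h i = h j"
    show "i = j"
    proof (rule ccontr)
      assume ne: "i \<noteq> j"
      define k' where "k' = h i"
      have k'\<Omega>: "k' \<in> \<Omega>" using hA[OF i] k'_def by simp
      have kk: "k \<noteq> k'" using kA(1)[OF i] k'\<Omega> by auto
      have k'N: "k' < N" using k'\<Omega> support by auto
      have iv: "i \<in> {1..v}" and jv: "j \<in> {1..v}" using kA(2) i j by auto
      have Mne: "M i \<noteq> M j" using distinct ne iv jv by (auto dest: inj_onD)
      have pi: "prime (M i)" and pj: "prime (M j)" using primes iv jv by auto
      have di: "int (M i) dvd int k - int k'"
      proof -
        have "k mod M i = k' mod M i" using hA[OF i] k'_def by simp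
        then have "int k mod int (M i) = int k' mod int (M i)" by (metis of_nat_mod)
        then show ?thesis by (simp add: mod_eq_dvd_iff)
      qed
      have dj: "int (M j) dvd int k - int k'"
      proof -
        have "k mod M j = k' mod M j" using hA[OF j] k'_def hij by simp
        then have "int k mod int (M j) = int k' mod int (M j)" by (metis of_nat_mod)
        then show ?thesis by (simp add: mod_eq_dvd_iff)
      qed
      have cop: "coprime (int (M i)) (int (M j))"
        using primes_coprime[OF pi pj Mne] by simp
      have "int (M i) * int (M j) dvd int k - int k'" by (rule divides_mult[OF di dj cop])
      then have "\<bar>int (M i) * int (M j)\<bar> \<le> \<bar>int k - int k'\<bar>"
        by (rule dvd_imp_le_int[rotated]) (use kk in simp)
      moreover have "\<bar>int k - int k'\<bar> < int N" using bin k'N by linarith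
      moreover have "int N < int (M i) * int (M j)" using prod_gt iv jv ne by (metis of_nat_less_iff of_nat_mult)
      ultimately show False by simp
    qed
  qed
  have fin: "finite \<Omega>" using support finite_subset by blast
  have "card ?A \<le> card \<Omega>"
    by (rule card_inj_on_le[OF inj _ fin]) (use hA in blast)
  then show ?thesis using sparse by simp
qed




theorem theorem1:
  fixes v J N s k :: nat
    and M :: "nat \<Rightarrow> nat"
    and \<gamma> :: "nat \<Rightarrow> nat \<Rightarrow> real"
    and \<Omega> :: "nat set"
    and lam \<mu> :: real
    and P0 :: "'a measure" and X0 :: "'a \<Rightarrow> real"
    and P1 :: "'b measure" and X1 :: "'b \<Rightarrow> real"
  assumes "v \<ge> 1" and "J \<ge> 1" and "N \<ge> 1"
    and primes: "\<forall>i\<in>{1..v}. prime (M i)"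
    and distinct: "inj_on M {1..v}"
    and consecutive: "\<forall>p. prime p \<and> (\<exists>i\<in>{1..v}. M i \<le> p) \<and> (\<exists>j\<in>{1..v}. p \<le> M j)
                         \<longrightarrow> p \<in> M ` {1..v}"
    and prod_gt: "\<forall>i\<in>{1..v}. \<forall>j\<in>{1..v}. i \<noteq> j \<longrightarrow> M i * M j > N"
    and support: "\<Omega> \<subseteq> {..<N}" and sparse: "card \<Omega> \<le> s"
    and bin: "k < N"
    and thr: "lam > 0"
    and snr: "\<forall>i\<in>{1..v}. \<gamma> i k \<ge> 0"
    and H0: "has_nc_chi2_law P0 X0 (2 * J * v)
               (2 / real N * (\<Sum>i\<in>aliased_CRs v M \<Omega> k. real (M i) * \<gamma> i k))"
    and H1: "has_nc_chi2_law P1 X1 (2 * J * v) \<mu>"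
    and H1_nc: "\<mu> \<ge> 2 / real N * (\<Sum>i=1..v. real (M i) * \<gamma> i k)"
  shows "card (aliased_CRs v M \<Omega> k) \<le> s \<and>
    (\<forall>\<Upsilon>. aliased_CRs v M \<Omega> k \<subseteq> \<Upsilon> \<and> \<Upsilon> \<subseteq> {1..v} \<and> card \<Upsilon> = s \<longrightarrow>
       upper_Gamma (real (J * v)) (lam / 2) / Gamma (real (J * v))
         \<le> measure P0 {\<omega> \<in> space P0. X0 \<omega> > lam} \<and>
       measure P0 {\<omega> \<in> space P0. X0 \<omega> > lam}
         \<le> marcumQ (J * v) (sqrt (2 / real N * (\<Sum>i\<in>\<Upsilon>. real (M i) * \<gamma> i k))) (sqrt lam)) \<and>
    measure P1 {\<omega> \<in> space P1. X1 \<omega> > lam}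
      \<ge> marcumQ (J * v) (sqrt (2 / real N * (\<Sum>i=1..v. real (M i) * \<gamma> i k))) (sqrt lam)"
proof -
  define u' where "u' = J * v - 1"
  have u: "J * v = Suc u'" unfolding u'_def using assms(1,2) by (simp add: Suc_le_eq)
  have d: "2 * J * v = 2 * Suc u'" using u by (simp add: mult.assoc)
  let ?A = "aliased_CRs v M \<Omega> k"
  have Asub: "?A \<subseteq> {1..v}" unfolding aliased_CRs_def by auto
  have lam2: "0 \<le> lam / 2" using thr by simp
  define mu0 where "mu0 = 2 / real N * (\<Sum>i\<in>?A. real (M i) * \<gamma> i k)"
  define mua where "mua = 2 / real N * (\<Sum>i=1..v. real (M i) * \<gamma> i k)"
  have mu0: "0 \<le> mu0" unfolding mu0_def
    using snr Asub by (intro mult_nonneg_nonneg sum_nonneg) auto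
  have mua: "0 \<le> mua" unfolding mua_def
    using snr by (intro mult_nonneg_nonneg sum_nonneg) auto
  have mu: "0 \<le> \<mu>" using H1_nc mua mua_def by linarith
  have MQ: "marcumQ (J * v) (sqrt \<nu>) (sqrt lam) = Tsum (J * v) (lam / 2) \<nu>" if nu: "0 \<le> \<nu>" for \<nu>
  proof (cases "\<nu> = 0")
    case True
    then show ?thesis unfolding u marcumQ_def using thr upper_Gamma_pc[of "lam/2" u'] Tsum_zero
      by simp
  next
    case False
    then have "sqrt \<nu> > 0" using nu by simp
    from marcum_pos[OF this, of "sqrt lam" u'] show ?thesis
      using thr nu unfolding u by simp
  qed
  have Pf: "measure P0 {\<omega> \<in> space P0. X0 \<omega> > lam} = Tsum (J * v) (lam / 2) mu0"
    using prob_tail[of P0 X0 u' mu0 lam] H0 mu0 thr unfolding d u mu0_def by simp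
  have Pd: "measure P1 {\<omega> \<in> space P1. X1 \<omega> > lam} = Tsum (J * v) (lam / 2) \<mu>"
    using prob_tail[of P1 X1 u' \<mu> lam] H1 mu thr unfolding d u by simp
  have G: "upper_Gamma (real (J * v)) (lam / 2) / Gamma (real (J * v)) = Tsum (J * v) (lam / 2) 0"
    unfolding u using thr upper_Gamma_pc[of "lam/2" u'] Tsum_zero by simp
  show ?thesis
  proof (intro conjI allI impI)
    show "card ?A \<le> s"
      by (rule card_aliased[OF primes distinct prod_gt support sparse bin])
  next
    fix \<Upsilon> assume H: "?A \<subseteq> \<Upsilon> \<and> \<Upsilon> \<subseteq> {1..v} \<and> card \<Upsilon> = s"
    define muU where "muU = 2 / real N * (\<Sum>i\<in>\<Upsilon>. real (M i) * \<gamma> i k)"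
    have le: "mu0 \<le> muU" unfolding mu0_def muU_def
    proof (rule mult_left_mono)
      show "(\<Sum>i\<in>?A. real (M i) * \<gamma> i k) \<le> (\<Sum>i\<in>\<Upsilon>. real (M i) * \<gamma> i k)"
        using H snr by (intro sum_mono2) (auto intro: finite_subset)
    qed simp
    show "upper_Gamma (real (J * v)) (lam / 2) / Gamma (real (J * v))
         \<le> measure P0 {\<omega> \<in> space P0. X0 \<omega> > lam}"
      unfolding G Pf by (rule Tsum_mono[OF lam2 order_refl mu0])
    show "measure P0 {\<omega> \<in> space P0. X0 \<omega> > lam}
         \<le> marcumQ (J * v) (sqrt (2 / real N * (\<Sum>i\<in>\<Upsilon>. real (M i) * \<gamma> i k))) (sqrt lam)"
      unfolding Pf muU_def[symmetric] MQ[OF order_trans[OF mu0 le]] by (rule Tsum_mono[OF lam2 mu0 le])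
  next
    show "measure P1 {\<omega> \<in> space P1. X1 \<omega> > lam}
      \<ge> marcumQ (J * v) (sqrt (2 / real N * (\<Sum>i=1..v. real (M i) * \<gamma> i k))) (sqrt lam)"
      unfolding Pd mua_def[symmetric] MQ[OF mua] using H1_nc unfolding mua_def[symmetric]
      by (rule Tsum_mono[OF lam2 mua])
  qed
qed


end
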